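(* Fix parameters (including $K\in\mathbb N$ and $\beta_{IA}\in(0,1]$) and a population size vector $\mathbf m$ as in the context, with Assumption (A). Then the problem $\min_{\mathbf y\in\mathcal Y}\overline{SC}(\mathbf y)$ has a unique solution $\mathbf y^\star(\mathbf m,K,\beta_{IA})$.
   Context: Let $D_{\max}\in\mathbb N$, $\mathcal D=\{1,\dots,D_{\max}\}$. A population size vector is $\mathbf m=(m_d)_{d\in\mathcal D}$ with $m_d>0$, $\sum_d m_d=1$. Parameters: $\tau_{DA}\in(0,1]$; $0\le L_P<L_U$; $0\le p_P^i<p_U^i\le1$; $\beta_{IA}\in(0,1]$; $K\in\mathbb N$; $c_P,c_I\ge0$; $\xi_{\rm cov}\in(0,1]$, $ded\ge0$. Let $\mathcal Y=\prod_{d\in\mathcal D}[0,m_d]$. For $\mathbf y\in\mathcal Y$ set $g_d=y_d/m_d$, $w_d=d\,m_d/\sum_{d'}d'm_{d'}$, $\gamma(\mathbf y)=\beta_{IA}\sum_d w_d(g_dp_P^i+(1-g_d)p_U^i)$, $\lambda(\mathbf y)=\beta_{IA}\sum_d w_d(d-1)(g_dp_P^i+(1-g_d)p_U^i)$, $e(\mathbf y)=\gamma(\mathbf y)\sum_{k=1}^K\lambda(\mathbf y)^{k-1}$, $C_{d,P}(\mathbf y)=\tau_{DA}(1+d\,e(\mathbf y))L_P+c_P$, $C_{d,N}(\mathbf y)=\tau_{DA}(1+d\,e(\mathbf y))L_U$, and the social cost $\overline{SC}(\mathbf y)=\sum_{d\in\mathcal D}\big(y_dC_{d,P}(\mathbf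 y)+(m_d-y_d)C_{d,N}(\mathbf y)\big)$ (here $y_d$ is the mass of degree-$d$ nodes that protect, the rest take no action). Assumption (A): $L_P<(1-\xi_{\rm cov})L_U$ and $c_P>c_I+ded$. *)

theory Defs
  imports Complex_Main
begin

text \<open>Degree set D = {1..Dmax}. Population vectors and strategy profiles are
functions nat => real; profiles are normalised to 0 outside {1..Dmax}.\<close>

definition feasible_set :: "nat \<Rightarrow> (nat \<Rightarrow> real) \<Rightarrow> (nat \<Rightarrow> real) set" where
  "feasible_set Dmax m =
     {y. (\<forall>d\<in>{1..Dmax}. 0 \<le> y d \<and> y d \<le> m d) \<and> (\<forall>d. d \<notin> {1..Dmax} \<longrightarrow> y d = 0)}"

definition wdeg :: "nat \<Rightarrow> (nat \<Rightarrow> real) \<Rightarrow> nat \<Rightarrow> real" where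
  "wdeg Dmax m d = real d * m d / (\<Sum>d'\<in>{1..Dmax}. real d' * m d')"

definition gam :: "nat \<Rightarrow> (nat \<Rightarrow> real) \<Rightarrow> real \<Rightarrow> real \<Rightarrow> real \<Rightarrow> (nat \<Rightarrow> real) \<Rightarrow> real" where
  "gam Dmax m beta pP pU y =
     beta * (\<Sum>d\<in>{1..Dmax}. wdeg Dmax m d * ((y d / m d) * pP + (1 - y d / m d) * pU))"

definition lam :: "nat \<Rightarrow> (nat \<Rightarrow> real) \<Rightarrow> real \<Rightarrow> real \<Rightarrow> real \<Rightarrow> (nat \<Rightarrow> real) \<Rightarrow> real" where
  "lam Dmax m beta pP pU y =
     beta * (\<Sum>d\<in>{1..Dmax}. wdeg Dmax m d * (real d - 1) *
                 ((y d / m d) * pP + (1 - y d / m d) * pU))"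

definition eexp :: "nat \<Rightarrow> (nat \<Rightarrow> real) \<Rightarrow> real \<Rightarrow> real \<Rightarrow> real \<Rightarrow> nat \<Rightarrow> (nat \<Rightarrow> real) \<Rightarrow> real" where
  "eexp Dmax m beta pP pU K y =
     gam Dmax m beta pP pU y * (\<Sum>k\<in>{1..K}. lam Dmax m beta pP pU y ^ (k - 1))"

definition cost_P :: "nat \<Rightarrow> (nat \<Rightarrow> real) \<Rightarrow> real \<Rightarrow> real \<Rightarrow> real \<Rightarrow> nat \<Rightarrow>
    real \<Rightarrow> real \<Rightarrow> real \<Rightarrow> nat \<Rightarrow> (nat \<Rightarrow> real) \<Rightarrow> real" where
  "cost_P Dmax m beta pP pU K tau LP cP d y =
     tau * (1 + real d * eexp Dmax m beta pP pU K y) * LP + cP"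

definition cost_N :: "nat \<Rightarrow> (nat \<Rightarrow> real) \<Rightarrow> real \<Rightarrow> real \<Rightarrow> real \<Rightarrow> nat \<Rightarrow>
    real \<Rightarrow> real \<Rightarrow> nat \<Rightarrow> (nat \<Rightarrow> real) \<Rightarrow> real" where
  "cost_N Dmax m beta pP pU K tau LU d y =
     tau * (1 + real d * eexp Dmax m beta pP pU K y) * LU"

definition social_cost :: "nat \<Rightarrow> (nat \<Rightarrow> real) \<Rightarrow> real \<Rightarrow> real \<Rightarrow> real \<Rightarrow> nat \<Rightarrow>
    real \<Rightarrow> real \<Rightarrow> real \<Rightarrow> real \<Rightarrow> (nat \<Rightarrow> real) \<Rightarrow> real" where
  "social_cost Dmax m beta pP pU K tau LP LU cP y =
     (\<Sum>d\<in>{1..Dmax}. y d * cost_P Dmax m beta pP pU K tau LP cP d y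
                     + (m d - y d) * cost_N Dmax m beta pP pU K tau LU d y)"

end

theory Submission
  imports Defs "HOL-Analysis.Analysis"
begin

lemma quad_mid: "(u - d * a) * (v - e * a) + (u - d * a') * (v - e * a') - 2 * ((u - d * ((a + a') / 2)) * (v - e * ((a + a') / 2))) = d * e * (a - a')^2 / (2::real)"
  by (simp add: field_simps power2_eq_square)

locale SCset =
  fixes Dmax K :: nat and m :: "nat \<Rightarrow> real"
    and tau LP LU pP pU beta cP :: real
  assumes mpos: "\<forall>d\<in>{1..Dmax}. m d > 0"
    and tau: "0 < tau"
    and LP: "0 \<le> LP" "LP < LU"
    and pP: "0 \<le> pP" "pP < pU"
    and beta: "0 < beta"
    and K: "K \<ge> 1"
    and D1: "Dmax \<ge> 1"
begin

definition "FS = feasible_set Dmax m"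
definition "SC y = social_cost Dmax m beta pP pU K tau LP LU cP y"
definition "S = (\<Sum>d\<in>{1..Dmax}. real d * m d)"
definition "T = (\<Sum>d\<in>{1..Dmax}. real d * (real d - 1) * m d)"
definition "sy y = (\<Sum>d\<in>{1..Dmax}. y d)"
definition "ay y = (\<Sum>d\<in>{1..Dmax}. real d * y d)"
definition "by' y = (\<Sum>d\<in>{1..Dmax}. real d * (real d - 1) * y d)"
definition "Gm a = beta * (pU * S - (pU - pP) * a) / S"
definition "Lm b = beta * (pU * T - (pU - pP) * b) / S"
definition "Q b = (\<Sum>k\<in>{1..K}. Lm b ^ (k - 1))"
definition "H a = S * LU - (LU - LP) * a"
definition "G a = Gm a * H a"
definition "F y = tau * LU * (\<Sum>d\<in>{1..Dmax}. m d) + (cP - tau * (LU - LP)) * sy y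
                  + tau * G (ay y) * Q (by' y)"

lemma gam_eq: "gam Dmax m beta pP pU y = Gm (ay y)"
proof -
  have t: "wdeg Dmax m d * ((y d / m d) * pP + (1 - y d / m d) * pU)
      = (pU * (real d * m d) - (pU - pP) * (real d * y d)) / S" if "d \<in> {1..Dmax}" for d
  proof -
    have "m d > 0" using mpos that by auto
    then have e: "real d * m d * ((y d / m d) * pP + (1 - y d / m d) * pU)
        = pU * (real d * m d) - (pU - pP) * (real d * y d)" by (simp add: field_simps)
    have "wdeg Dmax m d * ((y d / m d) * pP + (1 - y d / m d) * pU)
       = (real d * m d * ((y d / m d) * pP + (1 - y d / m d) * pU)) / S"
      unfolding wdeg_def S_def[symmetric] by simp
    then show ?thesis using e by simp
  qed
  have "gam Dmax m beta pP pU y = beta * (\<Sum>d\<in>{1..Dmax}.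
        (pU * (real d * m d) - (pU - pP) * (real d * y d)) / S)"
    unfolding gam_def
    apply (rule arg_cong[where f="\<lambda>x. beta * x"])
    apply (rule sum.cong[OF refl])
    by (erule t)
  also have "\<dots> = Gm (ay y)"
    unfolding Gm_def ay_def S_def
    by (simp add: sum_divide_distrib[symmetric] sum_subtractf sum_distrib_left[symmetric])
  finally show ?thesis .
qed

lemma lam_eq: "lam Dmax m beta pP pU y = Lm (by' y)"
proof -
  have t: "wdeg Dmax m d * (real d - 1) * ((y d / m d) * pP + (1 - y d / m d) * pU)
      = (pU * (real d * (real d - 1) * m d) - (pU - pP) * (real d * (real d - 1) * y d)) / S"
    if "d \<in> {1..Dmax}" for d
  proof -
    have "m d > 0" using mpos that by auto
    then have e: "real d * m d * (real d - 1) * ((y d / m d) * pP + (1 - y d / m d) * pU)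
        = pU * (real d * (real d - 1) * m d) - (pU - pP) * (real d * (real d - 1) * y d)"
      by (simp add: field_simps)
    have "wdeg Dmax m d * (real d - 1) * ((y d / m d) * pP + (1 - y d / m d) * pU)
       = (real d * m d * (real d - 1) * ((y d / m d) * pP + (1 - y d / m d) * pU)) / S"
      unfolding wdeg_def S_def[symmetric] by simp
    then show ?thesis using e by simp
  qed
  have "lam Dmax m beta pP pU y = beta * (\<Sum>d\<in>{1..Dmax}.
        (pU * (real d * (real d - 1) * m d) - (pU - pP) * (real d * (real d - 1) * y d)) / S)"
    unfolding lam_def
    apply (rule arg_cong[where f="\<lambda>x. beta * x"])
    apply (rule sum.cong[OF refl])
    by (erule t)
  also have "\<dots> = Lm (by' y)"
    unfolding Lm_def by'_def T_def
    by (simp add: sum_divide_distrib[symmetric] sum_subtractf sum_distrib_left[symmetric])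
  finally show ?thesis .
qed

lemma eexp_eq: "eexp Dmax m beta pP pU K y = Gm (ay y) * Q (by' y)"
  unfolding eexp_def gam_eq lam_eq Q_def ..

lemma SC_eq: "SC y = F y"
proof -
  define e where "e = eexp Dmax m beta pP pU K y"
  have t: "y d * cost_P Dmax m beta pP pU K tau LP cP d y
                     + (m d - y d) * cost_N Dmax m beta pP pU K tau LU d y
      = tau * LU * m d + (cP - tau * (LU - LP)) * y d
        + tau * e * (LU * (real d * m d) - (LU - LP) * (real d * y d))" for d
    unfolding cost_P_def cost_N_def e_def[symmetric] by (simp add: algebra_simps)
  have "SC y = (\<Sum>d\<in>{1..Dmax}. tau * LU * m d + (cP - tau * (LU - LP)) * y d
        + tau * e * (LU * (real d * m d) - (LU - LP) * (real d * y d)))"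
    unfolding SC_def social_cost_def t ..
  also have "\<dots> = tau * LU * (\<Sum>d\<in>{1..Dmax}. m d) + (cP - tau * (LU - LP)) * sy y
        + tau * e * H (ay y)"
    unfolding sy_def H_def ay_def S_def
    by (simp add: sum.distrib sum_subtractf sum_distrib_left[symmetric])
  also have "\<dots> = F y"
    unfolding F_def e_def eexp_eq G_def by (simp add: algebra_simps)
  finally show ?thesis .
qed

lemma FS_iff: "y \<in> FS \<longleftrightarrow> (\<forall>d\<in>{1..Dmax}. 0 \<le> y d \<and> y d \<le> m d) \<and> (\<forall>d. d \<notin> {1..Dmax} \<longrightarrow> y d = 0)"
  unfolding FS_def feasible_set_def by simp

lemma S_pos: "S > 0"
  unfolding S_def using mpos D1 by (intro sum_pos) auto

lemma T_nn: "T \<ge> 0"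
  unfolding T_def using mpos by (intro sum_nonneg mult_nonneg_nonneg) (auto simp: less_imp_le)

lemma ay_le: "y \<in> FS \<Longrightarrow> ay y \<le> S"
  unfolding ay_def S_def FS_iff by (intro sum_mono mult_left_mono) auto

lemma by_le: "y \<in> FS \<Longrightarrow> by' y \<le> T"
  unfolding by'_def T_def FS_iff by (intro sum_mono mult_left_mono) auto

lemma Gm_nn: "a \<le> S \<Longrightarrow> Gm a \<ge> 0"
proof -
  assume "a \<le> S"
  then have "(pU - pP) * a \<le> (pU - pP) * S" using pP by (intro mult_left_mono) auto
  moreover have "pP * S \<ge> 0" using pP S_pos by simp
  ultimately have "pU * S - (pU - pP) * a \<ge> 0" by (simp add: algebra_simps)
  then show ?thesis unfolding Gm_def using beta S_pos by simp
qed

lemma Lm_nn: "b \<le> T \<Longrightarrow> Lm b \<ge> 0"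
proof -
  assume "b \<le> T"
  then have "(pU - pP) * b \<le> (pU - pP) * T" using pP by (intro mult_left_mono) auto
  moreover have "pP * T \<ge> 0" using pP T_nn by simp
  ultimately have "pU * T - (pU - pP) * b \<ge> 0" by (simp add: algebra_simps)
  then show ?thesis unfolding Lm_def using beta S_pos by simp
qed

lemma H_nn: "a \<le> S \<Longrightarrow> H a \<ge> 0"
proof -
  assume "a \<le> S"
  then have "(LU - LP) * a \<le> (LU - LP) * S" using LP by (intro mult_left_mono) auto
  moreover have "LP * S \<ge> 0" using LP S_pos by simp
  ultimately show ?thesis unfolding H_def by (simp add: algebra_simps)
qed

lemma G_strict_dec: "a < a' \<Longrightarrow> a' \<le> S \<Longrightarrow> G a' < G a"
proof -
  assume aa: "a < a'" "a' \<le> S"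
  have "(pU - pP) * a < (pU - pP) * a'" using aa pP by (intro mult_strict_left_mono) auto
  then have "pU * S - (pU - pP) * a' < pU * S - (pU - pP) * a" by linarith
  then have "beta * (pU * S - (pU - pP) * a') < beta * (pU * S - (pU - pP) * a)"
    using beta by (intro mult_strict_left_mono) auto
  then have g: "Gm a' < Gm a" unfolding Gm_def using S_pos
    by (intro divide_strict_right_mono) auto
  have h: "H a' < H a" unfolding H_def using aa LP by (simp add: mult_strict_left_mono)
  have "G a' = Gm a' * H a'" by (simp add: G_def)
  also have "\<dots> \<le> Gm a' * H a" using h Gm_nn[OF aa(2)] by (intro mult_left_mono) auto
  also have "\<dots> < Gm a * H a" using g h H_nn[OF aa(2)] by (intro mult_strict_right_mono) auto
  finally show ?thesis by (simp add: G_def)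
qed

lemma G_mid: "a \<noteq> a' \<Longrightarrow> G ((a + a') / 2) < (G a + G a') / 2"
proof -
  assume "a \<noteq> a'"
  define k where "k = beta * (pU - pP) * (LU - LP) / S"
  have k: "k > 0" unfolding k_def using beta pP LP S_pos by simp
  define P where "P x = (pU * S - (pU - pP) * x) * (S * LU - (LU - LP) * x)" for x
  have GP: "G x = beta / S * P x" for x unfolding G_def Gm_def H_def P_def by simp
  have PP: "P a + P a' - 2 * P ((a + a') / 2) = (pU - pP) * (LU - LP) * (a - a')^2 / 2"
    unfolding P_def by (rule quad_mid)
  have "(G a + G a') / 2 - G ((a + a') / 2) = beta / S * (P a + P a' - 2 * P ((a + a') / 2)) / 2"
    unfolding GP by (simp add: algebra_simps add_divide_distrib)
  also have "\<dots> = k * (a - a')^2 / 4" unfolding PP k_def by simp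
  moreover have "k * (a - a')^2 / 4 > 0" using k \<open>a \<noteq> a'\<close> by simp
  ultimately show ?thesis by linarith
qed

lemma Q_ge1: "b \<le> T \<Longrightarrow> Q b \<ge> 1"
proof -
  assume "b \<le> T"
  have "Q b = Lm b ^ (1 - 1) + (\<Sum>k\<in>{1..K} - {1}. Lm b ^ (k - 1))"
    unfolding Q_def using K by (subst sum.remove[of _ 1]) auto
  moreover have "(\<Sum>k\<in>{1..K} - {1}. Lm b ^ (k - 1)) \<ge> 0"
    using Lm_nn[OF \<open>b \<le> T\<close>] by (intro sum_nonneg) auto
  ultimately show ?thesis by simp
qed

lemma Lm_mono: "b \<le> b' \<Longrightarrow> Lm b' \<le> Lm b"
proof -
  assume "b \<le> b'"
  then have "(pU - pP) * b \<le> (pU - pP) * b'" using pP by (intro mult_left_mono) auto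
  then have "pU * T - (pU - pP) * b' \<le> pU * T - (pU - pP) * b" by linarith
  then have "beta * (pU * T - (pU - pP) * b') \<le> beta * (pU * T - (pU - pP) * b)"
    using beta by (intro mult_left_mono) auto
  then show ?thesis unfolding Lm_def using S_pos
    by (intro divide_right_mono) auto
qed

lemma Q_mono: "b \<le> b' \<Longrightarrow> b' \<le> T \<Longrightarrow> Q b' \<le> Q b"
  unfolding Q_def using Lm_nn Lm_mono
  by (intro sum_mono power_mono) auto

lemma pow_mid: "(u::real) \<ge> 0 \<Longrightarrow> v \<ge> 0 \<Longrightarrow> ((u + v) / 2) ^ n \<le> (u ^ n + v ^ n) / 2"
proof (induction n)
  case 0 then show ?case by simp
next
  case (Suc n)
  have "((u + v) / 2) ^ Suc n = ((u + v) / 2) * ((u + v) / 2) ^ n" by simp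
  also have "\<dots> \<le> ((u + v) / 2) * ((u ^ n + v ^ n) / 2)"
    using Suc by (intro mult_left_mono) auto
  also have "\<dots> \<le> (u ^ Suc n + v ^ Suc n) / 2"
  proof -
    have "(u - v) * (u ^ n - v ^ n) \<ge> 0"
    proof (cases "u \<le> v")
      case True
      then have "u ^ n \<le> v ^ n" using Suc by (intro power_mono) auto
      then show ?thesis using True by (intro mult_nonpos_nonpos) auto
    next
      case False
      then have "v ^ n \<le> u ^ n" using Suc by (intro power_mono) auto
      then show ?thesis using False by (intro mult_nonneg_nonneg) auto
    qed
    then show ?thesis by (simp add: algebra_simps)
  qed
  finally show ?case .
qed

lemma Lm_mid: "Lm ((b + b') / 2) = (Lm b + Lm b') / 2"
  unfolding Lm_def using S_pos by (simp add: field_simps)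

lemma Q_mid: "b \<le> T \<Longrightarrow> b' \<le> T \<Longrightarrow> Q ((b + b') / 2) \<le> (Q b + Q b') / 2"
proof -
  assume bb: "b \<le> T" "b' \<le> T"
  have "Q ((b + b') / 2) \<le> (\<Sum>k\<in>{1..K}. (Lm b ^ (k - 1) + Lm b' ^ (k - 1)) / 2)"
    unfolding Q_def Lm_mid using Lm_nn[OF bb(1)] Lm_nn[OF bb(2)]
    by (intro sum_mono pow_mid) auto
  also have "\<dots> = (Q b + Q b') / 2"
    unfolding Q_def by (simp add: sum_divide_distrib[symmetric] sum.distrib)
  finally show ?thesis .
qed

definition "ismin y \<longleftrightarrow> y \<in> FS \<and> (\<forall>z\<in>FS. F y \<le> F z)"

lemma lin_upd: "(\<Sum>i\<in>{1..Dmax}. c i * (y i + e * ((if i = d' then 1 else 0) - (if i = d then 1 else 0))))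
   = (\<Sum>i\<in>{1..Dmax}. c i * y i) + e * (c d' - c d)"
  if "d \<in> {1..Dmax}" "d' \<in> {1..Dmax}" for c :: "nat \<Rightarrow> real"
proof -
  have t: "c i * (y i + e * ((if i = d' then 1 else 0) - (if i = d then 1 else 0)))
      = c i * y i + e * ((if i = d' then c i else 0) - (if i = d then c i else 0))" for i
    by (cases "i = d"; cases "i = d'") (auto simp: algebra_simps)
  have "(\<Sum>i\<in>{1..Dmax}. c i * (y i + e * ((if i = d' then 1 else 0) - (if i = d then 1 else 0))))
     = (\<Sum>i\<in>{1..Dmax}. c i * y i) + e * ((\<Sum>i\<in>{1..Dmax}. if i = d' then c i else 0)
          - (\<Sum>i\<in>{1..Dmax}. if i = d then c i else 0))"
    unfolding t by (simp only: sum.distrib sum_subtractf[symmetric] sum_distrib_left)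
  also have "\<dots> = (\<Sum>i\<in>{1..Dmax}. c i * y i) + e * (c d' - c d)"
    using that by (simp only: sum.delta finite_atLeastAtMost if_True)
  finally show ?thesis .
qed

lemma lin_mid: "(\<Sum>i\<in>{1..Dmax}. c i * ((y i + y' i) / 2))
   = ((\<Sum>i\<in>{1..Dmax}. c i * y i) + (\<Sum>i\<in>{1..Dmax}. c i * y' i)) / 2" for c :: "nat \<Rightarrow> real"
  by (simp add: algebra_simps sum.distrib sum_divide_distrib[symmetric])

lemma G_nn: "a \<le> S \<Longrightarrow> G a \<ge> 0"
  unfolding G_def using Gm_nn H_nn by simp

lemma sorted:
  assumes "ismin y" "d \<in> {1..Dmax}" "d' \<in> {1..Dmax}" "d < d'" "y d > 0"
  shows "y d' = m d'"
proof (rule ccontr)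
  assume ne: "y d' \<noteq> m d'"
  have yF: "y \<in> FS" using assms(1) unfolding ismin_def by simp
  then have "y d' \<le> m d'" using assms(3) unfolding FS_iff by auto
  with ne have lt: "y d' < m d'" by simp
  define e where "e = min (y d) (m d' - y d')"
  have e: "e > 0" "e \<le> y d" "e \<le> m d' - y d'" using lt assms(5) unfolding e_def by auto
  define y' where "y' i = y i + e * ((if i = d' then 1 else 0) - (if i = d then 1 else 0))" for i
  have dd: "d \<noteq> d'" using assms(4) by simp
  have y'F: "y' \<in> FS"
    unfolding FS_iff
  proof (intro conjI ballI allI impI)
    fix i assume i: "i \<in> {1..Dmax}"
    have yi: "0 \<le> y i" "y i \<le> m i" using yF i unfolding FS_iff by auto
    show "0 \<le> y' i" using yi e dd unfolding y'_def by (cases "i = d"; cases "i = d'") auto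
    show "y' i \<le> m i" using yi e dd unfolding y'_def by (cases "i = d"; cases "i = d'") auto
  next
    fix i assume i: "i \<notin> {1..Dmax}"
    then have "i \<noteq> d" "i \<noteq> d'" using assms(2,3) by auto
    then show "y' i = 0" using yF i unfolding FS_iff y'_def by auto
  qed
  have s: "sy y' = sy y"
    using lin_upd[OF assms(2,3), of "\<lambda>_. 1" y e] unfolding sy_def y'_def by simp
  have a: "ay y' = ay y + e * (real d' - real d)"
    using lin_upd[OF assms(2,3), of "\<lambda>i. real i" y e] unfolding ay_def y'_def by simp
  have b: "by' y' = by' y + e * (real d' * (real d' - 1) - real d * (real d - 1))"
    using lin_upd[OF assms(2,3), of "\<lambda>i. real i * (real i - 1)" y e] unfolding by'_def y'_def by simp
  have "real d < real d'" using assms(4) by simp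
  then have alt: "ay y < ay y'" unfolding a using e by simp
  have "real d * (real d - 1) \<le> real d' * (real d' - 1)"
    using assms(2,4) by (intro mult_mono) auto
  then have ble: "by' y \<le> by' y'" unfolding b using e by simp
  have "G (ay y') * Q (by' y') \<le> G (ay y') * Q (by' y)"
    using G_nn[OF ay_le[OF y'F]] Q_mono[OF ble by_le[OF y'F]] by (intro mult_left_mono) auto
  also have "\<dots> < G (ay y) * Q (by' y)"
    using G_strict_dec[OF alt ay_le[OF y'F]] Q_ge1[OF by_le[OF yF]]
    by (intro mult_strict_right_mono) auto
  finally have "F y' < F y" unfolding F_def s using tau
    by (simp add: mult.assoc)
  moreover have "F y \<le> F y'" using assms(1) y'F unfolding ismin_def by auto
  ultimately show False by simp
qed

lemma comparable:
  assumes "ismin y" "ismin y'"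
  shows "(\<forall>d\<in>{1..Dmax}. y d \<le> y' d) \<or> (\<forall>d\<in>{1..Dmax}. y' d \<le> y d)"
proof (rule ccontr)
  assume "\<not> ?thesis"
  then obtain i j where ij: "i \<in> {1..Dmax}" "j \<in> {1..Dmax}" "y i > y' i" "y' j > y j"
    by (auto simp: not_le)
  have yF: "y \<in> FS" "y' \<in> FS" using assms unfolding ismin_def by auto
  show False
  proof (cases "i < j")
    case True
    have "y i > 0" using ij yF(2) unfolding FS_iff by force
    then have "y j = m j" using sorted[OF assms(1) ij(1,2) True] by simp
    moreover have "y' j \<le> m j" using ij yF(2) unfolding FS_iff by auto
    ultimately show False using ij by simp
  next
    case False
    then have ji: "j < i" using ij by (cases "i = j") auto
    have "y' j > 0" using ij yF(1) unfolding FS_iff by force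
    then have "y' i = m i" using sorted[OF assms(2) ij(2,1) ji] by simp
    moreover have "y i \<le> m i" using ij yF(1) unfolding FS_iff by auto
    ultimately show False using ij by simp
  qed
qed

lemma unique_le:
  assumes "ismin y" "ismin y'" "\<forall>d\<in>{1..Dmax}. y d \<le> y' d"
  shows "y = y'"
proof (rule ccontr)
  assume ne: "y \<noteq> y'"
  have yF: "y \<in> FS" "y' \<in> FS" using assms unfolding ismin_def by auto
  obtain i where i: "y i \<noteq> y' i" using ne by auto
  have iD: "i \<in> {1..Dmax}"
  proof (rule ccontr)
    assume "i \<notin> {1..Dmax}"
    then have "y i = 0" "y' i = 0" using yF unfolding FS_iff by auto
    with i show False by simp
  qed
  then have lt: "y i < y' i" using assms(3) i by force
  have alt: "ay y < ay y'" unfolding ay_def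
  proof (rule sum_strict_mono_ex1)
    show "\<forall>x\<in>{1..Dmax}. real x * y x \<le> real x * y' x"
      using assms(3) by (auto intro!: mult_left_mono)
    show "\<exists>a\<in>{1..Dmax}. real a * y a < real a * y' a"
      using iD lt by (intro bexI[of _ i]) auto
  qed simp
  have ble: "by' y \<le> by' y'" unfolding by'_def
    using assms(3) by (intro sum_mono mult_left_mono) auto
  define ym where "ym i = (y i + y' i) / 2" for i
  have ymF: "ym \<in> FS" unfolding FS_iff
  proof (intro conjI ballI allI impI)
    fix d assume d: "d \<in> {1..Dmax}"
    have "0 \<le> y d" "y d \<le> m d" "0 \<le> y' d" "y' d \<le> m d" using yF d unfolding FS_iff by auto
    then show "0 \<le> ym d" "ym d \<le> m d" unfolding ym_def by auto
  next
    fix d assume d: "d \<notin> {1..Dmax}"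
    then show "ym d = 0" using yF unfolding FS_iff ym_def by auto
  qed
  have s: "sy ym = (sy y + sy y') / 2"
    using lin_mid[of "\<lambda>_. 1" y y'] unfolding sy_def ym_def by simp
  have a: "ay ym = (ay y + ay y') / 2"
    using lin_mid[of "\<lambda>i. real i" y y'] unfolding ay_def ym_def by simp
  have b: "by' ym = (by' y + by' y') / 2"
    using lin_mid[of "\<lambda>i. real i * (real i - 1)" y y'] unfolding by'_def ym_def by simp
  define g1 where "g1 = G (ay y)"
  define g2 where "g2 = G (ay y')"
  define q1 where "q1 = Q (by' y)"
  define q2 where "q2 = Q (by' y')"
  have gm: "G (ay ym) < (g1 + g2) / 2" unfolding a g1_def g2_def
    using alt by (intro G_mid) simp
  have gm0: "G (ay ym) \<ge> 0" using G_nn[OF ay_le[OF ymF]] .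
  have qm: "Q (by' ym) \<le> (q1 + q2) / 2" unfolding b q1_def q2_def
    using Q_mid[OF by_le[OF yF(1)] by_le[OF yF(2)]] .
  have qm1: "Q (by' ym) \<ge> 1" using Q_ge1[OF by_le[OF ymF]] .
  have gg: "g2 < g1" unfolding g1_def g2_def using G_strict_dec[OF alt ay_le[OF yF(2)]] .
  have qq: "q2 \<le> q1" unfolding q1_def q2_def using Q_mono[OF ble by_le[OF yF(2)]] .
  have "G (ay ym) * Q (by' ym) \<le> G (ay ym) * ((q1 + q2) / 2)"
    using gm0 qm by (intro mult_left_mono) auto
  also have "\<dots> < ((g1 + g2) / 2) * ((q1 + q2) / 2)"
    using gm qm qm1 by (intro mult_strict_right_mono) auto
  also have "\<dots> \<le> (g1 * q1 + g2 * q2) / 2"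
  proof -
    have "(g1 - g2) * (q1 - q2) \<ge> 0" using gg qq by simp
    then show ?thesis by (simp add: algebra_simps)
  qed
  finally have key: "G (ay ym) * Q (by' ym) < (g1 * q1 + g2 * q2) / 2" .
  have "F ym = tau * LU * (\<Sum>d\<in>{1..Dmax}. m d) + (cP - tau * (LU - LP)) * ((sy y + sy y') / 2)
                  + tau * (G (ay ym) * Q (by' ym))" unfolding F_def s by simp
  also have "\<dots> < tau * LU * (\<Sum>d\<in>{1..Dmax}. m d) + (cP - tau * (LU - LP)) * ((sy y + sy y') / 2)
                  + tau * ((g1 * q1 + g2 * q2) / 2)"
    using key tau by simp
  also have "\<dots> = (F y + F y') / 2" unfolding F_def g1_def g2_def q1_def q2_def
    by (simp add: algebra_simps add_divide_distrib)
  finally have "F ym < (F y + F y') / 2" .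
  moreover have "F y \<le> F y'" "F y' \<le> F y" "F y \<le> F ym"
    using assms(1,2) yF ymF unfolding ismin_def by auto
  ultimately show False by simp
qed

lemma coord_cont: "continuous_on A (\<lambda>x::nat\<Rightarrow>real. x i)"
  by (rule continuous_on_subset[OF continuous_on_product_coordinates]) simp

lemma FS_compact: "compact FS"
proof -
  define B where "B d = (if d \<in> {1..Dmax} then {0..m d} else {0::real})" for d
  have FSeq: "FS = PiE UNIV B"
    unfolding FS_iff B_def set_eq_iff PiE_def extensional_def Pi_def by auto
  have "compactin (product_topology (\<lambda>_. euclidean) UNIV) (PiE UNIV B)"
    unfolding compactin_PiE B_def by auto
  then show ?thesis unfolding FSeq euclidean_product_topology by simp
qed

lemma F_cont: "continuous_on A F"
  unfolding F_def sy_def ay_def by'_def G_def Gm_def H_def Q_def Lm_def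
  using S_pos by (intro continuous_intros coord_cont) auto

lemma exists_min: "\<exists>y. ismin y"
proof -
  have "(\<lambda>_. 0) \<in> FS" unfolding FS_iff using mpos by (auto simp: less_imp_le)
  then have "FS \<noteq> {}" by auto
  from continuous_attains_inf[OF FS_compact this F_cont]
  show ?thesis unfolding ismin_def by blast
qed

end

theorem theorem5:
  fixes Dmax K :: nat and m :: "nat \<Rightarrow> real"
    and tau LP LU pP pU beta cP cI xi ded :: real
  assumes "Dmax \<ge> 1"
    and "\<forall>d\<in>{1..Dmax}. m d > 0" and "(\<Sum>d\<in>{1..Dmax}. m d) = 1"
    and "0 < tau" "tau \<le> 1"
    and "0 \<le> LP" "LP < LU"
    and "0 \<le> pP" "pP < pU" "pU \<le> 1"
    and "0 < beta" "beta \<le> 1"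
    and "K \<ge> 1"
    and "cP \<ge> 0" "cI \<ge> 0"
    and "0 < xi" "xi \<le> 1" "ded \<ge> 0"
    and "LP < (1 - xi) * LU" "cP > cI + ded"
  shows "\<exists>!ys. ys \<in> feasible_set Dmax m \<and>
           (\<forall>y\<in>feasible_set Dmax m.
              social_cost Dmax m beta pP pU K tau LP LU cP ys
                \<le> social_cost Dmax m beta pP pU K tau LP LU cP y)"
proof -
  interpret SCset Dmax K m tau LP LU pP pU beta cP
    using assms by unfold_locales auto
  have eq: "social_cost Dmax m beta pP pU K tau LP LU cP y = F y" for y
    using SC_eq unfolding SC_def .
  have iff: "(ys \<in> feasible_set Dmax m \<and>
           (\<forall>y\<in>feasible_set Dmax m.
              social_cost Dmax m beta pP pU K tau LP LU cP ys
                \<le> social_cost Dmax m beta pP pU K tau LP LU cP y)) \<longleftrightarrow> ismin ys" for ys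
    unfolding ismin_def FS_def eq ..
  obtain x where x: "ismin x" using exists_min by blast
  show ?thesis unfolding iff
  proof (rule ex1I[of _ x])
    show "ismin x" by (rule x)
  next
    fix y assume y: "ismin y"
    from comparable[OF y x] show "y = x"
      using unique_le[OF y x] unique_le[OF x y] by auto
  qed
qed

end
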